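(* Let $(U,\|\cdot\|)$ be a uniformly convex Banach space and let $Q\subseteq U$ be a nonempty, bounded, closed, convex set. Let $r>0$ and let $\alpha_n:Q\to\mathbb{R}$ ($n\in\mathbb{N}$) be functions with $\alpha_n(q)\to 1$ as $n\to\infty$ for every $q\in Q$. Suppose $T:Q\to Q$ satisfies: for all $p,q\in Q$ with $\|p-q\|<r$, $$\|T^np-T^nq\|\leq \alpha_n(q)\|p-q\|\quad\text{for every } n\in\mathbb{N}.$$ If there exists $q_0\in Q$ such that the asymptotic radius of the sequence $\{T^nq_0\}_n$ relative to $Q$ is less than $r$, then $T$ has a fixed point.
   Context: For a bounded sequence $\{x_n\}_n$ in $U$, its asymptotic radius relative to $Q$ is $\rho=\inf_{y\in Q}\limsup_{n\to\infty}\|x_n-y\|$. *)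

theory Defs
  imports "HOL-Analysis.Analysis"
begin

definition uniformly_convex :: "'a::real_normed_vector itself \<Rightarrow> bool" where
  "uniformly_convex (_::'a itself) \<longleftrightarrow>
     (\<forall>\<epsilon>>0. \<exists>\<delta>>0. \<forall>x y::'a. norm x \<le> 1 \<and> norm y \<le> 1 \<and> norm (x - y) \<ge> \<epsilon>
        \<longrightarrow> norm ((1/2) *\<^sub>R (x + y)) \<le> 1 - \<delta>)"

definition asymptotic_radius :: "'a::real_normed_vector set \<Rightarrow> (nat \<Rightarrow> 'a) \<Rightarrow> ereal" where
  "asymptotic_radius Q x = (INF y\<in>Q. limsup (\<lambda>n. ereal (norm (x n - y))))"

end

theory Submission
  imports Defs
begin

lemma key_lemma:
  fixes x :: "nat \<Rightarrow> 'a::real_normed_vector" and Q :: "'a set" and \<rho> :: real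
  assumes UC: "uniformly_convex TYPE('a)" and cvx: "convex Q"
    and A: "\<And>m c. m \<in> Q \<Longrightarrow> eventually (\<lambda>n. norm (x n - m) \<le> c) sequentially \<Longrightarrow> \<rho> \<le> c"
    and ep: "\<epsilon> > 0"
  shows "\<exists>\<eta>>0. \<forall>y\<in>Q. \<forall>y'\<in>Q. eventually (\<lambda>n. norm (x n - y) < \<rho> + \<eta>) sequentially
     \<longrightarrow> eventually (\<lambda>n. norm (x n - y') < \<rho> + \<eta>) sequentially \<longrightarrow> norm (y - y') < \<epsilon>"
proof -
  have e1: "\<epsilon> / (\<bar>\<rho>\<bar> + 1) > 0" using ep by simp
  obtain \<delta> where dpos: "\<delta> > 0" and UCd: "\<And>u v::'a. norm u \<le> 1 \<Longrightarrow> norm v \<le> 1 \<Longrightarrow>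
      norm (u - v) \<ge> \<epsilon> / (\<bar>\<rho>\<bar> + 1) \<Longrightarrow> norm ((1/2) *\<^sub>R (u + v)) \<le> 1 - \<delta>"
    using UC e1 unfolding uniformly_convex_def by meson
  define \<eta> where "\<eta> = min 1 (\<delta> * \<epsilon> / 4)"
  have etapos: "\<eta> > 0" using dpos ep by (simp add: \<eta>_def)
  show ?thesis
  proof (intro exI[of _ \<eta>] conjI ballI impI etapos)
    fix y y' assume yQ: "y \<in> Q" and y'Q: "y' \<in> Q"
      and ev1: "eventually (\<lambda>n. norm (x n - y) < \<rho> + \<eta>) sequentially"
      and ev2: "eventually (\<lambda>n. norm (x n - y') < \<rho> + \<eta>) sequentially"
    show "norm (y - y') < \<epsilon>"
    proof (rule ccontr)
      assume "\<not> norm (y - y') < \<epsilon>"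
      hence big: "norm (y - y') \<ge> \<epsilon>" by simp
      define s where "s = \<rho> + \<eta>"
      define m where "m = (1/2) *\<^sub>R y + (1/2) *\<^sub>R y'"
      have mQ: "m \<in> Q" unfolding m_def using cvx yQ y'Q by (intro convexD) auto
      have ev3: "eventually (\<lambda>n. norm (x n - y) < s \<and> norm (x n - y') < s) sequentially"
        using eventually_conj[OF ev1 ev2] by (simp add: s_def)
      then obtain N where "\<forall>n\<ge>N. norm (x n - y) < s \<and> norm (x n - y') < s"
        unfolding eventually_sequentially by blast
      then obtain n where h1: "norm (x n - y) < s" and h2: "norm (x n - y') < s" by blast
      have "y - y' = (x n - y') - (x n - y)" by simp
      hence "norm (y - y') \<le> norm (x n - y') + norm (x n - y)"
        by (metis norm_triangle_ineq4)
      hence s2: "2 * s > \<epsilon>" using big h1 h2 by linarith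
      hence spos: "s > 0" using ep by linarith
      have sle: "s \<le> \<bar>\<rho>\<bar> + 1" unfolding s_def \<eta>_def by linarith
      have "eventually (\<lambda>n. norm (x n - m) \<le> (1 - \<delta>) * s) sequentially"
        using ev3
      proof (rule eventually_mono)
        fix n assume "norm (x n - y) < s \<and> norm (x n - y') < s"
        hence a1: "norm (x n - y) < s" and a2: "norm (x n - y') < s" by auto
        define u where "u = (1/s) *\<^sub>R (x n - y)"
        define v where "v = (1/s) *\<^sub>R (x n - y')"
        have "norm u = \<bar>1/s\<bar> * norm (x n - y)" unfolding u_def by (rule norm_scaleR)
        hence "norm u = norm (x n - y) / s" using spos by simp
        hence nu: "norm u \<le> 1" using a1 spos by (simp add: divide_le_eq_1)
        have "norm v = \<bar>1/s\<bar> * norm (x n - y')" unfolding v_def by (rule norm_scaleR)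
        hence "norm v = norm (x n - y') / s" using spos by simp
        hence nv: "norm v \<le> 1" using a2 spos by (simp add: divide_le_eq_1)
        have "u - v = (1/s) *\<^sub>R (y' - y)" unfolding u_def v_def by (simp add: algebra_simps)
        hence nuv: "norm (u - v) = norm (y - y') / s" using spos by (simp add: norm_minus_commute)
        have "\<epsilon> / (\<bar>\<rho>\<bar> + 1) \<le> \<epsilon> / s" using spos sle ep by (intro divide_left_mono) auto
        also have "\<epsilon> / s \<le> norm (y - y') / s" using big spos by (simp add: divide_right_mono)
        finally have "norm (u - v) \<ge> \<epsilon> / (\<bar>\<rho>\<bar> + 1)" using nuv by simp
        from UCd[OF nu nv this] have c: "norm ((1/2) *\<^sub>R (u + v)) \<le> 1 - \<delta>" .
        have "(1/2) *\<^sub>R (u + v) = (1/s) *\<^sub>R (x n - m)"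
        proof -
          have hh: "(1/2) *\<^sub>R x n + (1/2) *\<^sub>R x n = x n"
            by (metis scaleR_half_double scaleR_add_right)
          have e0: "(x n - y) + (x n - y') = (x n + x n) - (y + y')" by (simp add: algebra_simps)
          have e3: "x n - m = (1/2) *\<^sub>R ((x n - y) + (x n - y'))"
            unfolding e0 m_def scaleR_diff_right scaleR_add_right by (simp only: hh)
          have e1: "u + v = (1/s) *\<^sub>R ((x n - y) + (x n - y'))"
            unfolding u_def v_def by (rule scaleR_add_right[symmetric])
          show ?thesis unfolding e1 e3 scaleR_scaleR by (simp only: mult.commute)
        qed
        hence "norm (x n - m) / s \<le> 1 - \<delta>" using c spos by simp
        thus "norm (x n - m) \<le> (1 - \<delta>) * s" using spos by (simp add: field_simps)
      qed
      from A[OF mQ this] have "\<rho> \<le> (1 - \<delta>) * s" .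
      hence "\<delta> * s \<le> \<eta>" unfolding s_def by (simp add: algebra_simps)
      moreover have "\<delta> * s > \<delta> * \<epsilon> / 2" using s2 dpos by simp
      moreover have "\<eta> \<le> \<delta> * \<epsilon> / 4" by (simp add: \<eta>_def)
      moreover have "\<delta> * \<epsilon> > 0" using dpos ep by simp
      ultimately show False by linarith
    qed
  qed
qed


lemma iterQ: "T ` Q \<subseteq> Q \<Longrightarrow> p \<in> Q \<Longrightarrow> (T ^^ n) p \<in> Q"
  by (induction n) auto

theorem mainTheorem2:
  fixes Q :: "'a::banach set" and T :: "'a \<Rightarrow> 'a"
    and \<alpha> :: "nat \<Rightarrow> 'a \<Rightarrow> real" and r :: real
  assumes "uniformly_convex TYPE('a)"
    and "Q \<noteq> {}" and "bounded Q" and "closed Q" and "convex Q"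
    and "r > 0"
    and "\<And>q. q \<in> Q \<Longrightarrow> (\<lambda>n. \<alpha> n q) \<longlonglongrightarrow> 1"
    and "T ` Q \<subseteq> Q"
    and "\<And>p q n. p \<in> Q \<Longrightarrow> q \<in> Q \<Longrightarrow> norm (p - q) < r \<Longrightarrow> n \<ge> 1 \<Longrightarrow>
           norm ((T ^^ n) p - (T ^^ n) q) \<le> \<alpha> n q * norm (p - q)"
    and "\<exists>q0\<in>Q. asymptotic_radius Q (\<lambda>n. (T ^^ n) q0) < ereal r"
  shows "\<exists>x\<in>Q. T x = x"
proof -
  note UC = assms(1) and clQ = assms(4) and cvx = assms(5) and rpos = assms(6)
    and alim = assms(7) and TQ = assms(8) and H = assms(9)
  obtain q0 where q0Q: "q0 \<in> Q" and rad: "asymptotic_radius Q (\<lambda>n. (T ^^ n) q0) < ereal r"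
    using assms(10) by blast
  define x where "x = (\<lambda>n. (T ^^ n) q0)"
  have xQ: "x n \<in> Q" for n unfolding x_def using iterQ[OF TQ q0Q] .
  define \<rho> where "\<rho> = asymptotic_radius Q x"
  have \<rho>def: "\<rho> = (INF y\<in>Q. limsup (\<lambda>n. ereal (norm (x n - y))))"
    unfolding \<rho>_def asymptotic_radius_def ..
  have \<rho>ge: "0 \<le> \<rho>" unfolding \<rho>def
  proof (rule INF_greatest)
    fix y assume "y \<in> Q"
    show "0 \<le> limsup (\<lambda>n. ereal (norm (x n - y)))"
      by (rule le_Limsup) auto
  qed
  have \<rho>lt: "\<rho> < ereal r" using rad unfolding \<rho>_def x_def .
  define \<rho>r where "\<rho>r = real_of_ereal \<rho>"
  have \<rho>eq: "\<rho> = ereal \<rho>r" unfolding \<rho>r_def using \<rho>ge \<rho>lt by (cases \<rho>) auto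
  have \<rho>r0: "0 \<le> \<rho>r" using \<rho>ge \<rho>eq by simp
  have \<rho>rr: "\<rho>r < r" using \<rho>lt \<rho>eq by simp
  have A: "\<rho>r \<le> c" if mQ: "m \<in> Q" and ev: "eventually (\<lambda>n. norm (x n - m) \<le> c) sequentially" for m c
  proof -
    have "\<rho> \<le> limsup (\<lambda>n. ereal (norm (x n - m)))" unfolding \<rho>def using mQ by (rule INF_lower)
    also have "\<dots> \<le> ereal c" by (rule Limsup_bounded) (use ev in \<open>auto elim: eventually_mono\<close>)
    finally show ?thesis using \<rho>eq by simp
  qed
  have B: "\<exists>y\<in>Q. eventually (\<lambda>n. norm (x n - y) < c) sequentially" if "c > \<rho>r" for c
  proof -
    have "\<rho> < ereal c" using that \<rho>eq by simp
    then obtain y where yQ: "y \<in> Q" and "limsup (\<lambda>n. ereal (norm (x n - y))) < ereal c"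
      unfolding \<rho>def by (auto simp: INF_less_iff)
    from Limsup_lessD[OF this(2)] have "eventually (\<lambda>n. norm (x n - y) < c) sequentially" by simp
    with yQ show ?thesis by blast
  qed
  have key: "\<exists>\<eta>>0. \<forall>y\<in>Q. \<forall>y'\<in>Q. eventually (\<lambda>n. norm (x n - y) < \<rho>r + \<eta>) sequentially
     \<longrightarrow> eventually (\<lambda>n. norm (x n - y') < \<rho>r + \<eta>) sequentially \<longrightarrow> norm (y - y') < e"
    if "e > 0" for e
    by (rule key_lemma[OF UC cvx A that]) auto
  have "\<forall>k. \<exists>y. y \<in> Q \<and> eventually (\<lambda>n. norm (x n - y) < \<rho>r + 1 / real (Suc k)) sequentially"
  proof
    fix k
    have "\<rho>r + 1 / real (Suc k) > \<rho>r" by simp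
    from B[OF this] show "\<exists>y. y \<in> Q \<and> eventually (\<lambda>n. norm (x n - y) < \<rho>r + 1 / real (Suc k)) sequentially"
      by blast
  qed
  from choice[OF this] obtain ys where ys: "\<forall>k. ys k \<in> Q \<and> eventually (\<lambda>n. norm (x n - ys k) < \<rho>r + 1 / real (Suc k)) sequentially"
    by blast
  have ysQ: "\<And>k. ys k \<in> Q" using ys by blast
  have ysev: "\<And>k. eventually (\<lambda>n. norm (x n - ys k) < \<rho>r + 1 / real (Suc k)) sequentially"
    using ys by blast
  have inv_le: "1 / real (Suc m) \<le> 1 / real (Suc K)" if "K \<le> m" for K m
    using that by (simp add: frac_le)
  have "Cauchy ys"
    unfolding Cauchy_def
  proof (intro allI impI)
    fix e :: real assume "e > 0"
    then obtain \<eta> where \<eta>: "\<eta> > 0" and kk: "\<forall>y\<in>Q. \<forall>y'\<in>Q. eventually (\<lambda>n. norm (x n - y) < \<rho>r + \<eta>) sequentially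
     \<longrightarrow> eventually (\<lambda>n. norm (x n - y') < \<rho>r + \<eta>) sequentially \<longrightarrow> norm (y - y') < e"
      using key by blast
    obtain K where K: "inverse (real (Suc K)) < \<eta>" using reals_Archimedean[OF \<eta>] by blast
    have evk: "eventually (\<lambda>n. norm (x n - ys m) < \<rho>r + \<eta>) sequentially" if "m \<ge> K" for m
      using ysev[of m]
    proof (rule eventually_mono)
      fix n assume "norm (x n - ys m) < \<rho>r + 1 / real (Suc m)"
      moreover have "1 / real (Suc m) \<le> 1 / real (Suc K)" using inv_le[OF that] .
      ultimately show "norm (x n - ys m) < \<rho>r + \<eta>" using K by (simp add: inverse_eq_divide)
    qed
    show "\<exists>M. \<forall>m\<ge>M. \<forall>n\<ge>M. dist (ys m) (ys n) < e"
    proof (intro exI[of _ K] allI impI)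
      fix m n assume "K \<le> m" "K \<le> n"
      hence "norm (ys m - ys n) < e" using kk ysQ[of m] ysQ[of n] evk[of m] evk[of n] by blast
      thus "dist (ys m) (ys n) < e" by (simp add: dist_norm)
    qed
  qed
  then obtain z where ysz: "ys \<longlonglongrightarrow> z" using Cauchy_convergent convergent_def by blast
  have zQ: "z \<in> Q" using closed_sequentially[OF clQ] ysQ ysz by blast
  have zgood: "eventually (\<lambda>n. norm (x n - z) < \<rho>r + \<eta>) sequentially" if \<eta>: "\<eta> > 0" for \<eta>
  proof -
    obtain K1 where K1: "\<forall>k\<ge>K1. norm (ys k - z) < \<eta>/2"
      using ysz \<eta> unfolding LIMSEQ_iff by (meson half_gt_zero)
    obtain K2 where K2: "inverse (real (Suc K2)) < \<eta>/2"
      using reals_Archimedean[of "\<eta>/2"] \<eta> by auto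
    define k where "k = max K1 K2"
    have k1: "norm (ys k - z) < \<eta>/2" using K1 by (simp add: k_def)
    have k2: "1 / real (Suc k) < \<eta>/2"
      using inv_le[of K2 k] K2 by (simp add: k_def inverse_eq_divide)
    show ?thesis using ysev[of k]
    proof (rule eventually_mono)
      fix n assume a: "norm (x n - ys k) < \<rho>r + 1 / real (Suc k)"
      have "norm (x n - z) \<le> norm (x n - ys k) + norm (ys k - z)"
        by (metis diff_add_cancel add_diff_eq norm_triangle_ineq diff_diff_eq2)
      thus "norm (x n - z) < \<rho>r + \<eta>" using a k1 k2 by linarith
    qed
  qed
  have zr: "eventually (\<lambda>n. norm (x n - z) < r) sequentially"
    using zgood[of "r - \<rho>r"] \<rho>rr by simp
  have Tbound: "eventually (\<lambda>n. norm (x n - (T ^^ m) z) \<le> \<bar>\<alpha> m z\<bar> * (\<rho>r + \<eta>)) sequentially"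
    if m1: "m \<ge> 1" and \<eta>: "\<eta> > 0" for m \<eta>
  proof -
    have "eventually (\<lambda>n. norm (x (n + m) - (T ^^ m) z) \<le> \<bar>\<alpha> m z\<bar> * (\<rho>r + \<eta>)) sequentially"
      using eventually_conj[OF zr zgood[OF \<eta>]]
    proof (rule eventually_mono)
      fix n assume a: "norm (x n - z) < r \<and> norm (x n - z) < \<rho>r + \<eta>"
      have xe: "x (n + m) = (T ^^ m) (x n)" unfolding x_def
        by (simp add: funpow_add add.commute[of n m])
      have "norm (x (n + m) - (T ^^ m) z) \<le> \<alpha> m z * norm (x n - z)"
        unfolding xe using H[OF xQ zQ _ m1] a by blast
      also have "\<dots> \<le> \<bar>\<alpha> m z\<bar> * norm (x n - z)" by (simp add: mult_right_mono)
      also have "\<dots> \<le> \<bar>\<alpha> m z\<bar> * (\<rho>r + \<eta>)" using a by (simp add: mult_left_mono)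
      finally show "norm (x (n + m) - (T ^^ m) z) \<le> \<bar>\<alpha> m z\<bar> * (\<rho>r + \<eta>)" .
    qed
    thus ?thesis by (subst (asm) eventually_sequentially_seg)
  qed
  have Tgood: "eventually (\<lambda>m. eventually (\<lambda>n. norm (x n - (T ^^ m) z) < \<rho>r + \<eta>') sequentially) sequentially"
    if \<eta>': "\<eta>' > 0" for \<eta>'
  proof -
    define c where "c = (\<rho>r + \<eta>') / (\<rho>r + \<eta>'/2)"
    have c1: "c > 1" unfolding c_def using \<eta>' \<rho>r0 by simp
    have "(\<lambda>m. \<bar>\<alpha> m z\<bar>) \<longlonglongrightarrow> \<bar>1\<bar>" by (rule tendsto_rabs[OF alim[OF zQ]])
    hence ev1: "eventually (\<lambda>m. \<bar>\<alpha> m z\<bar> < c) sequentially" using c1 by (simp add: order_tendstoD(2))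
    have ev2: "eventually (\<lambda>m. m \<ge> (1::nat)) sequentially" by (rule eventually_ge_at_top)
    show ?thesis using eventually_conj[OF ev1 ev2]
    proof (rule eventually_mono)
      fix m assume a: "\<bar>\<alpha> m z\<bar> < c \<and> m \<ge> 1"
      have pos: "\<rho>r + \<eta>'/2 > 0" using \<eta>' \<rho>r0 by simp
      have "\<bar>\<alpha> m z\<bar> * (\<rho>r + \<eta>'/2) < c * (\<rho>r + \<eta>'/2)" using a pos by simp
      also have "\<dots> = \<rho>r + \<eta>'" unfolding c_def using pos by simp
      finally have lt: "\<bar>\<alpha> m z\<bar> * (\<rho>r + \<eta>'/2) < \<rho>r + \<eta>'" .
      show "eventually (\<lambda>n. norm (x n - (T ^^ m) z) < \<rho>r + \<eta>') sequentially"
        using Tbound[of m "\<eta>'/2"] a \<eta>'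
        by (auto elim!: eventually_mono intro: order.strict_trans1[OF _ lt])
    qed
  qed
  have Tmz: "(\<lambda>m. (T ^^ m) z) \<longlonglongrightarrow> z"
    unfolding tendsto_iff dist_norm
  proof (intro allI impI)
    fix e :: real assume "e > 0"
    then obtain \<eta> where \<eta>: "\<eta> > 0" and kk: "\<forall>y\<in>Q. \<forall>y'\<in>Q. eventually (\<lambda>n. norm (x n - y) < \<rho>r + \<eta>) sequentially
     \<longrightarrow> eventually (\<lambda>n. norm (x n - y') < \<rho>r + \<eta>) sequentially \<longrightarrow> norm (y - y') < e"
      using key by blast
    show "eventually (\<lambda>m. norm ((T ^^ m) z - z) < e) sequentially"
      using Tgood[OF \<eta>]
    proof (rule eventually_mono)
      fix m assume "eventually (\<lambda>n. norm (x n - (T ^^ m) z) < \<rho>r + \<eta>) sequentially"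
      thus "norm ((T ^^ m) z - z) < e" using kk iterQ[OF TQ zQ, of m] zQ zgood[OF \<eta>] by blast
    qed
  qed
  have "((\<lambda>m. T ((T ^^ m) z) - T z) \<longlonglongrightarrow> 0)"
  proof (rule Lim_null_comparison)
    have "eventually (\<lambda>m. dist ((T ^^ m) z) z < r) sequentially"
      using Tmz rpos unfolding tendsto_iff by blast
    thus "eventually (\<lambda>m. norm (T ((T ^^ m) z) - T z) \<le> \<bar>\<alpha> 1 z\<bar> * norm ((T ^^ m) z - z)) sequentially"
    proof (rule eventually_mono)
      fix m assume "dist ((T ^^ m) z) z < r"
      hence d: "norm ((T ^^ m) z - z) < r" by (simp add: dist_norm)
      have "norm (T ((T ^^ m) z) - T z) \<le> \<alpha> 1 z * norm ((T ^^ m) z - z)"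
        using H[OF iterQ[OF TQ zQ] zQ d, of 1] by simp
      also have "\<dots> \<le> \<bar>\<alpha> 1 z\<bar> * norm ((T ^^ m) z - z)" by (simp add: mult_right_mono)
      finally show "norm (T ((T ^^ m) z) - T z) \<le> \<bar>\<alpha> 1 z\<bar> * norm ((T ^^ m) z - z)" .
    qed
    have "(\<lambda>m. norm ((T ^^ m) z - z)) \<longlonglongrightarrow> 0"
      using Tmz by (simp add: LIM_zero tendsto_norm_zero)
    thus "(\<lambda>m. \<bar>\<alpha> 1 z\<bar> * norm ((T ^^ m) z - z)) \<longlonglongrightarrow> 0"
      by (rule tendsto_mult_right_zero)
  qed
  hence l1: "(\<lambda>m. T ((T ^^ m) z)) \<longlonglongrightarrow> T z" by (rule LIM_zero_cancel)
  have "(\<lambda>m. (T ^^ Suc m) z) \<longlonglongrightarrow> z" using Tmz by (rule LIMSEQ_Suc)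
  hence l2: "(\<lambda>m. T ((T ^^ m) z)) \<longlonglongrightarrow> z" by simp
  have "T z = z" using LIMSEQ_unique[OF l1 l2] .
  with zQ show ?thesis by blast
qed

end
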